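(* Let assortments $S_1,\dots,S_n$ with feature vectors $x_{ti} \in \mathbb{R}^d$ be given, with $V_n = \sum_{t=1}^n\sum_{i\in S_t}x_{ti}x_{ti}^\top$ positive definite. Let the responses $y_1,\dots,y_n$ be drawn from the multinomial logit model with parameter $\theta^*$, independently conditional on the features, and let $\hat\theta$ be the maximum likelihood estimator. Define $$J_n(\theta) = \sum_{t=1}^n\sum_{i\in S_t}\left(p_t(i|S_t,\theta) - p_t(i|S_t,\theta^* )\right)x_{ti}.$$ Then for any $\delta > 0$, with probability at least $1-\delta$, $$\|J_n(\hat\theta)\|_{V_n^{-1}} \le 4\sqrt{2d + \log\frac1\delta}.$$
   Context: Multinomial logit model: $$p_t(i|S_t,\theta) = \frac{\exp(x_{ti}^\top\theta)}{1+\sum_{j\in S_t}\exp(x_{tj}^\top\theta)} \quad (i\in S_t),$$ with outside option $0$ having probability $1/(1+\sum_{j\in S_t}\exp(x_{tj}^\top\theta))$. The response $y_t = (y_{ti})_{i\in S_t\cup\{0\}}$ is one-hot, with $\mathbb{P}(y_{ti} = 1) = p_t(i|S_t,\theta^* )$. The MLE $\hat\theta$ solves $\sum_{t=1}^n\sum_{i\in S_t}\left(p_t(i|S_t,\theta) - y_{ti}\right)x_{ti} = 0$. Also $\|x\|_{V^{-1}} = \sqrt{x^\top V^{-1}x}$. *)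

theory Defs
  imports "HOL-Analysis.Analysis" "HOL-Probability.Probability"
begin

text \<open>Items of round t are of type 'i; the chosen option is 'i option,
  with None encoding the outside option 0.  Features x t i :: real^'d.\<close>

definition mnl_denom :: "(nat \<Rightarrow> 'i set) \<Rightarrow> (nat \<Rightarrow> 'i \<Rightarrow> real^'d) \<Rightarrow> real^'d \<Rightarrow> nat \<Rightarrow> real" where
  "mnl_denom S x \<theta> t = 1 + (\<Sum>j\<in>S t. exp (x t j \<bullet> \<theta>))"

definition mnl_prob :: "(nat \<Rightarrow> 'i set) \<Rightarrow> (nat \<Rightarrow> 'i \<Rightarrow> real^'d) \<Rightarrow> real^'d \<Rightarrow> nat \<Rightarrow> 'i option \<Rightarrow> real" where
  "mnl_prob S x \<theta> t c = (case c of
      None \<Rightarrow> 1 / mnl_denom S x \<theta> t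
    | Some i \<Rightarrow> (if i \<in> S t then exp (x t i \<bullet> \<theta>) / mnl_denom S x \<theta> t else 0))"

definition mnl_pmf :: "(nat \<Rightarrow> 'i set) \<Rightarrow> (nat \<Rightarrow> 'i \<Rightarrow> real^'d) \<Rightarrow> real^'d \<Rightarrow> nat \<Rightarrow> 'i option pmf" where
  "mnl_pmf S x \<theta> t = embed_pmf (mnl_prob S x \<theta> t)"

definition mnl_responses :: "nat \<Rightarrow> (nat \<Rightarrow> 'i set) \<Rightarrow> (nat \<Rightarrow> 'i \<Rightarrow> real^'d) \<Rightarrow> real^'d \<Rightarrow> (nat \<Rightarrow> 'i option) pmf" where
  "mnl_responses n S x \<theta> = Pi_pmf {1..n} None (mnl_pmf S x \<theta>)"

definition onehot :: "'i option \<Rightarrow> 'i \<Rightarrow> real" where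
  "onehot c i = (if c = Some i then 1 else 0)"

definition gram :: "nat \<Rightarrow> (nat \<Rightarrow> 'i set) \<Rightarrow> (nat \<Rightarrow> 'i \<Rightarrow> real^'d) \<Rightarrow> real^'d^'d" where
  "gram n S x = (\<Sum>t\<in>{1..n}. \<Sum>i\<in>S t. (\<chi> a b. (x t i $ a) * (x t i $ b)))"

definition pos_def :: "real^'d^'d \<Rightarrow> bool" where
  "pos_def V \<longleftrightarrow> transpose V = V \<and> (\<forall>v. v \<noteq> 0 \<longrightarrow> v \<bullet> (V *v v) > 0)"

definition inv_weighted_norm :: "real^'d^'d \<Rightarrow> real^'d \<Rightarrow> real" where
  "inv_weighted_norm V z = sqrt (z \<bullet> (matrix_inv V *v z))"

text \<open>Score function whose zero defines the MLE.\<close>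
definition mle_score :: "nat \<Rightarrow> (nat \<Rightarrow> 'i set) \<Rightarrow> (nat \<Rightarrow> 'i \<Rightarrow> real^'d) \<Rightarrow> (nat \<Rightarrow> 'i option) \<Rightarrow> real^'d \<Rightarrow> real^'d" where
  "mle_score n S x y \<theta> = (\<Sum>t\<in>{1..n}. \<Sum>i\<in>S t. (mnl_prob S x \<theta> t (Some i) - onehot (y t) i) *\<^sub>R x t i)"

definition J_n :: "nat \<Rightarrow> (nat \<Rightarrow> 'i set) \<Rightarrow> (nat \<Rightarrow> 'i \<Rightarrow> real^'d) \<Rightarrow> real^'d \<Rightarrow> real^'d \<Rightarrow> real^'d" where
  "J_n n S x \<theta>s \<theta> = (\<Sum>t\<in>{1..n}. \<Sum>i\<in>S t. (mnl_prob S x \<theta> t (Some i) - mnl_prob S x \<theta>s t (Some i)) *\<^sub>R x t i)"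

end

theory Submission
  imports Defs
begin


lemma mnl_denom_ge1: "mnl_denom S x \<theta> t \<ge> 1"
  unfolding mnl_denom_def by (simp add: sum_nonneg)

lemma mnl_prob_nonneg: "0 \<le> mnl_prob S x \<theta> t c"
  using mnl_denom_ge1[of S x \<theta> t]
  by (auto simp: mnl_prob_def split: option.splits)

lemma mnl_prob_le1:
  assumes "finite (S t)"
  shows "mnl_prob S x \<theta> t c \<le> 1"
proof (cases c)
  case None then show ?thesis using mnl_denom_ge1[of S x \<theta> t] by (simp add: mnl_prob_def)
next
  case (Some i)
  show ?thesis
  proof (cases "i \<in> S t")
    case True
    have "exp (x t i \<bullet> \<theta>) \<le> (\<Sum>j\<in>S t. exp (x t j \<bullet> \<theta>))"
      using True assms by (intro member_le_sum) auto
    then have "exp (x t i \<bullet> \<theta>) \<le> mnl_denom S x \<theta> t" unfolding mnl_denom_def by simp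
    then show ?thesis using Some True mnl_denom_ge1[of S x \<theta> t] by (simp add: mnl_prob_def)
  next
    case False
    then show ?thesis using Some by (auto simp: mnl_prob_def)
  qed
qed

lemma mnl_prob_sum:
  assumes "finite (S t)"
  shows "mnl_prob S x \<theta> t None + (\<Sum>i\<in>S t. mnl_prob S x \<theta> t (Some i)) = 1"
proof -
  have D: "mnl_denom S x \<theta> t > 0" using mnl_denom_ge1[of S x \<theta> t] by simp
  have "(\<Sum>i\<in>S t. mnl_prob S x \<theta> t (Some i)) = (\<Sum>i\<in>S t. exp (x t i \<bullet> \<theta>)) / mnl_denom S x \<theta> t"
    by (simp add: mnl_prob_def sum_divide_distrib)
  then show ?thesis using D by (simp add: mnl_prob_def mnl_denom_def field_simps)
qed

lemma mnl_prob_sum_full: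
  assumes "finite (S t)"
  shows "(\<Sum>c\<in>insert None (Some ` S t). mnl_prob S x \<theta> t c) = 1"
  using mnl_prob_sum[of S t x \<theta>] assms
  by (simp add: sum.reindex)

lemma mnl_prob_out: "c \<notin> insert None (Some ` S t) \<Longrightarrow> mnl_prob S x \<theta> t c = 0"
  by (auto simp: mnl_prob_def split: option.splits)

lemma pmf_mnl:
  assumes "finite (S t)"
  shows "pmf (mnl_pmf S x \<theta> t) c = mnl_prob S x \<theta> t c"
  unfolding mnl_pmf_def
proof (rule pmf_embed_pmf)
  show "\<And>c. 0 \<le> mnl_prob S x \<theta> t c" by (rule mnl_prob_nonneg)
  have "(\<integral>\<^sup>+c. ennreal (mnl_prob S x \<theta> t c) \<partial>count_space UNIV)
      = (\<Sum>c\<in>insert None (Some ` S t). ennreal (mnl_prob S x \<theta> t c))"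
    using assms by (intro nn_integral_count_space') (auto simp: mnl_prob_out)
  also have "\<dots> = ennreal (\<Sum>c\<in>insert None (Some ` S t). mnl_prob S x \<theta> t c)"
    by (rule sum_ennreal) (simp add: mnl_prob_nonneg)
  also have "\<dots> = 1" using mnl_prob_sum_full[of S t x \<theta>] assms by simp
  finally show "(\<integral>\<^sup>+c. ennreal (mnl_prob S x \<theta> t c) \<partial>count_space UNIV) = 1" .
qed

lemma set_mnl:
  assumes "finite (S t)"
  shows "set_pmf (mnl_pmf S x \<theta> t) \<subseteq> insert None (Some ` S t)"
proof
  fix c assume "c \<in> set_pmf (mnl_pmf S x \<theta> t)"
  then have "mnl_prob S x \<theta> t c \<noteq> 0" using pmf_mnl[of S t x \<theta> c] assms by (simp add: set_pmf_eq)
  then show "c \<in> insert None (Some ` S t)" by (metis mnl_prob_out)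
qed

lemma fin_mnl:
  assumes "finite (S t)"
  shows "finite (set_pmf (mnl_pmf S x \<theta> t))"
  using set_mnl[of S t x \<theta>] assms by (meson finite_imageI finite_insert finite_subset)

lemma fin_resp:
  assumes "\<And>t. t \<in> {1..n} \<Longrightarrow> finite (S t)"
  shows "finite (set_pmf (mnl_responses n S x \<theta>))"
proof -
  have "set_pmf (mnl_responses n S x \<theta>) = PiE_dflt {1..n} None (set_pmf \<circ> mnl_pmf S x \<theta>)"
    unfolding mnl_responses_def by (rule set_Pi_pmf) simp
  also have "\<dots> = (\<lambda>h xa. if xa \<in> {1..n} then h xa else None) ` PiE {1..n} (set_pmf \<circ> mnl_pmf S x \<theta>)"
    by (rule dflt_image_PiE[symmetric])
  finally show ?thesis by (simp only:) (intro finite_imageI finite_PiE; auto intro!: fin_mnl assms)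
qed



lemma onehot_sum:
  assumes "finite A"
  shows "(\<Sum>i\<in>A. onehot c i * \<alpha> i) = (case c of None \<Rightarrow> 0 | Some j \<Rightarrow> (if j \<in> A then \<alpha> j else 0))"
  proof (cases c)
  case (Some j)
  have "(\<Sum>i\<in>A. onehot c i * \<alpha> i) = (\<Sum>i\<in>A. if j = i then \<alpha> i else 0)"
    by (intro sum.cong) (auto simp: onehot_def Some)
  also have "\<dots> = (if j \<in> A then \<alpha> j else 0)" using assms by simp
  finally show ?thesis using Some by simp
qed (simp add: onehot_def)

lemma round_subg:
  fixes S :: "nat \<Rightarrow> 'i set" and \<alpha> :: "'i \<Rightarrow> real"
  assumes fin: "finite (S t)"
  shows "measure_pmf.expectation (mnl_pmf S x \<theta> t)
           (\<lambda>c. exp (\<Sum>i\<in>S t. (onehot c i - mnl_prob S x \<theta> t (Some i)) * \<alpha> i))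
         \<le> exp ((\<Sum>i\<in>S t. (\<alpha> i)\<^sup>2) / 2)"
proof -
  define P where "P = mnl_pmf S x \<theta> t"
  define f where "f c = (\<Sum>i\<in>S t. onehot c i * \<alpha> i)" for c
  define R where "R = sqrt (\<Sum>i\<in>S t. (\<alpha> i)\<^sup>2)"
  have finP: "finite (set_pmf P)" unfolding P_def using fin_mnl[of S t x \<theta>] fin by simp
  have pP: "pmf P c = mnl_prob S x \<theta> t c" for c unfolding P_def using pmf_mnl[of S t x \<theta> c] fin by simp
  have fbound: "\<bar>f c\<bar> \<le> R" for c
  proof (cases c)
    case None then show ?thesis using fin by (simp add: f_def onehot_sum R_def sum_nonneg)
  next
    case (Some j)
    show ?thesis
    proof (cases "j \<in> S t")
      case True
      have "(\<alpha> j)\<^sup>2 \<le> (\<Sum>i\<in>S t. (\<alpha> i)\<^sup>2)" using True fin by (intro member_le_sum) auto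
      then have "sqrt ((\<alpha> j)\<^sup>2) \<le> R" unfolding R_def by (rule real_sqrt_le_mono)
      then show ?thesis using Some True fin by (simp add: f_def onehot_sum)
    next
      case False then show ?thesis using Some fin by (simp add: f_def onehot_sum R_def sum_nonneg)
    qed
  qed
  have Ef: "measure_pmf.expectation P f = (\<Sum>i\<in>S t. mnl_prob S x \<theta> t (Some i) * \<alpha> i)"
  proof -
    have "measure_pmf.expectation P f = (\<Sum>a\<in>insert None (Some ` S t). f a * pmf P a)"
      using fin set_mnl[of S t x \<theta>] unfolding P_def
      by (intro integral_measure_pmf_real) auto
    also have "\<dots> = (\<Sum>i\<in>S t. f (Some i) * pmf P (Some i))"
      using fin by (simp add: sum.reindex f_def onehot_sum)
    also have "\<dots> = (\<Sum>i\<in>S t. mnl_prob S x \<theta> t (Some i) * \<alpha> i)"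
      using fin by (intro sum.cong) (auto simp: f_def onehot_sum pP)
    finally show ?thesis .
  qed
  have geq: "(\<Sum>i\<in>S t. (onehot c i - mnl_prob S x \<theta> t (Some i)) * \<alpha> i) = f c - measure_pmf.expectation P f" for c
    unfolding Ef f_def by (simp add: left_diff_distrib sum_subtractf)
  interpret I: interval_bounded_random_variable "measure_pmf P" f "-R" R
  proof unfold_locales
    show "f \<in> borel_measurable (measure_pmf P)" by simp
    show "AE c in measure_pmf P. f c \<in> {- R..R}" using fbound by (intro AE_I2) (simp add: abs_le_iff; smt (verit) fbound)
  qed
  have H: "(\<integral>\<^sup>+c. ennreal (exp (1 * (f c - measure_pmf.expectation P f))) \<partial>measure_pmf P)
        \<le> ennreal (exp (1\<^sup>2 * (R - - R)\<^sup>2 / 8))"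
    by (rule I.Hoeffdings_lemma_nn_integral) simp
  have "(\<integral>\<^sup>+c. ennreal (exp (1 * (f c - measure_pmf.expectation P f))) \<partial>measure_pmf P)
      = ennreal (measure_pmf.expectation P (\<lambda>c. exp (1 * (f c - measure_pmf.expectation P f))))"
    by (intro nn_integral_eq_integral integrable_measure_pmf_finite finP) auto
  with H have "measure_pmf.expectation P (\<lambda>c. exp (f c - measure_pmf.expectation P f)) \<le> exp ((2*R)\<^sup>2 / 8)"
    by (simp add: ennreal_le_iff)
  also have "(2*R)\<^sup>2 / 8 = (\<Sum>i\<in>S t. (\<alpha> i)\<^sup>2) / 2"
    unfolding R_def by (simp add: power_mult_distrib sum_nonneg)
  finally show ?thesis unfolding geq P_def .
qed



definition Zv :: "nat \<Rightarrow> (nat \<Rightarrow> 'i set) \<Rightarrow> (nat \<Rightarrow> 'i \<Rightarrow> real^'d) \<Rightarrow> real^'d \<Rightarrow> (nat \<Rightarrow> 'i option) \<Rightarrow> real^'d" where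
  "Zv n S x \<theta> y = (\<Sum>t\<in>{1..n}. \<Sum>i\<in>S t. (onehot (y t) i - mnl_prob S x \<theta> t (Some i)) *\<^sub>R x t i)"

lemma outer_mult: "(\<chi> a b. (u $ a) * (u $ b)) *v v = (u \<bullet> v) *\<^sub>R (u::real^'d)"
  by (simp add: vec_eq_iff matrix_vector_mult_def inner_vec_def sum_distrib_left sum_distrib_right mult_ac)

lemma sum_mat_vec: "(\<Sum>k\<in>K. M k) *v (v::real^'d) = (\<Sum>k\<in>K. M k *v v)"
  by (induction K rule: infinite_finite_induct) (auto simp: matrix_vector_mult_add_rdistrib)

lemma gram_mult: "gram n S x *v v = (\<Sum>t\<in>{1..n}. \<Sum>i\<in>S t. (x t i \<bullet> v) *\<^sub>R x t i)"
  unfolding gram_def sum_mat_vec outer_mult ..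

lemma gram_quad: "v \<bullet> (gram n S x *v v) = (\<Sum>t\<in>{1..n}. \<Sum>i\<in>S t. (v \<bullet> x t i)\<^sup>2)"
  unfolding gram_mult by (simp add: inner_sum_right power2_eq_square inner_commute)

lemma subg:
  fixes S :: "nat \<Rightarrow> 'i set" and x :: "nat \<Rightarrow> 'i \<Rightarrow> real^'d"
  assumes fin: "\<And>t. t \<in> {1..n} \<Longrightarrow> finite (S t)"
  shows "measure_pmf.expectation (mnl_responses n S x \<theta>) (\<lambda>y. exp (v \<bullet> Zv n S x \<theta> y))
         \<le> exp ((v \<bullet> (gram n S x *v v)) / 2)"
proof -
  define G where "G t c = (\<Sum>i\<in>S t. (onehot c i - mnl_prob S x \<theta> t (Some i)) * (v \<bullet> x t i))" for t c
  have e: "exp (v \<bullet> Zv n S x \<theta> y) = (\<Prod>t\<in>{1..n}. exp (G t (y t)))" for y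
    unfolding Zv_def G_def by (simp add: inner_sum_right exp_sum)
  have "measure_pmf.expectation (mnl_responses n S x \<theta>) (\<lambda>y. exp (v \<bullet> Zv n S x \<theta> y))
      = measure_pmf.expectation (mnl_responses n S x \<theta>) (\<lambda>y. \<Prod>t\<in>{1..n}. exp (G t (y t)))"
    unfolding e ..
  also have "\<dots> = (\<Prod>t\<in>{1..n}. measure_pmf.expectation (mnl_pmf S x \<theta> t) (\<lambda>c. exp (G t c)))"
    unfolding mnl_responses_def
    by (intro expectation_prod_Pi_pmf integrable_measure_pmf_finite fin_mnl fin) auto
  also have "\<dots> \<le> (\<Prod>t\<in>{1..n}. exp ((\<Sum>i\<in>S t. (v \<bullet> x t i)\<^sup>2) / 2))"
  proof (intro prod_mono conjI)
    fix t assume t: "t \<in> {1..n}"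
    show "0 \<le> measure_pmf.expectation (mnl_pmf S x \<theta> t) (\<lambda>c. exp (G t c))"
      by (intro Bochner_Integration.integral_nonneg) auto
    show "measure_pmf.expectation (mnl_pmf S x \<theta> t) (\<lambda>c. exp (G t c)) \<le> exp ((\<Sum>i\<in>S t. (v \<bullet> x t i)\<^sup>2) / 2)"
      unfolding G_def using round_subg[of S t x \<theta> "\<lambda>i. v \<bullet> x t i"] fin[OF t] by simp
  qed
  also have "\<dots> = exp ((v \<bullet> (gram n S x *v v)) / 2)"
    unfolding gram_quad by (simp add: exp_sum sum_divide_distrib)
  finally show ?thesis .
qed



lemma Vsym:
  fixes V :: "real^'d^'d"
  assumes "transpose V = V"
  shows "u \<bullet> (V *v w) = w \<bullet> (V *v u)"
  by (metis assms dot_lmul_matrix inner_commute vector_transpose_matrix)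

lemma Vlin: "b \<bullet> ((V::real^'d^'d) *v (\<Sum>c\<in>B. l c *\<^sub>R c)) = (\<Sum>c\<in>B. l c * (b \<bullet> (V *v c)))"
  by (simp add: linear_sum[OF matrix_vector_mul_linear] matrix_vector_mult_scaleR inner_sum_right)

lemma Vorth_coef:
  fixes V :: "real^'d^'d"
  assumes "finite B" "b \<in> B" "\<forall>b\<in>B. \<forall>c\<in>B. b \<noteq> c \<longrightarrow> b \<bullet> (V *v c) = 0"
  shows "b \<bullet> (V *v (\<Sum>c\<in>B. l c *\<^sub>R c)) = l b * (b \<bullet> (V *v b))"
proof -
  have "b \<bullet> (V *v (\<Sum>c\<in>B. l c *\<^sub>R c)) = (\<Sum>c\<in>B. l c * (b \<bullet> (V *v c)))" by (rule Vlin)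
  also have "\<dots> = l b * (b \<bullet> (V *v b)) + (\<Sum>c\<in>B - {b}. l c * (b \<bullet> (V *v c)))"
    using assms by (simp add: sum.remove)
  also have "(\<Sum>c\<in>B - {b}. l c * (b \<bullet> (V *v c))) = 0"
    using assms by (intro sum.neutral) auto
  finally show ?thesis by simp
qed

lemma Vbasis_ex:
  fixes V :: "real^'d^'d"
  assumes pd: "pos_def V"
  shows "k \<le> CARD('d) \<Longrightarrow> \<exists>B. finite B \<and> card B = k \<and> (\<forall>b\<in>B. b \<noteq> 0) \<and>
            (\<forall>b\<in>B. \<forall>c\<in>B. b \<noteq> c \<longrightarrow> b \<bullet> (V *v c) = 0)"
proof (induction k)
  case 0
  show ?case by (intro exI[of _ "{}"]) auto
next
  case (Suc k)
  then obtain B where B: "finite B" "card B = k" "\<forall>b\<in>B. b \<noteq> 0"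
      "\<forall>b\<in>B. \<forall>c\<in>B. b \<noteq> c \<longrightarrow> b \<bullet> (V *v c) = 0" by auto
  have sym: "transpose V = V" and pos: "\<And>v. v \<noteq> 0 \<Longrightarrow> v \<bullet> (V *v v) > 0"
    using pd by (auto simp: pos_def_def)
  have "span ((\<lambda>b. V *v b) ` B) \<noteq> UNIV"
  proof
    assume "span ((\<lambda>b. V *v b) ` B) = UNIV"
    then have "dim (UNIV :: (real^'d) set) \<le> card ((\<lambda>b. V *v b) ` B)"
      using B(1) by (intro dim_le_card) auto
    also have "\<dots> \<le> k" using B card_image_le by metis
    finally show False using Suc.prems by simp
  qed
  then obtain a :: "real^'d" where a: "a \<noteq> 0" "\<forall>z\<in>span ((\<lambda>b. V *v b) ` B). a \<bullet> z = 0"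
    using span_not_UNIV_orthogonal by blast
  have aB: "a \<bullet> (V *v b) = 0" if "b \<in> B" for b
    using a(2) that by (simp add: span_base)
  have "a \<notin> B" using aB pos[OF a(1)] by force
  show ?case
  proof (intro exI[of _ "insert a B"] conjI)
    show "finite (insert a B)" using B by simp
    show "card (insert a B) = Suc k" using B \<open>a \<notin> B\<close> by simp
    show "\<forall>b\<in>insert a B. b \<noteq> 0" using B a by simp
    show "\<forall>b\<in>insert a B. \<forall>c\<in>insert a B. b \<noteq> c \<longrightarrow> b \<bullet> (V *v c) = 0"
    proof (intro ballI impI)
      fix b c assume b: "b \<in> insert a B" and c: "c \<in> insert a B" and bc: "b \<noteq> c"
      show "b \<bullet> (V *v c) = 0"
      proof (cases "b = a")
        case True
        then have "c \<in> B" using c bc by simp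
        then show ?thesis using True aB by simp
      next
        case False
        then have bB: "b \<in> B" using b by simp
        show ?thesis
        proof (cases "c = a")
          case True
          have "b \<bullet> (V *v a) = a \<bullet> (V *v b)" by (rule Vsym[OF sym])
          then show ?thesis using True aB[OF bB] by simp
        next
          case False
          then show ?thesis using c bB bc B(4) by simp
        qed
      qed
    qed
  qed
qed

lemma Vinv:
  fixes V :: "real^'d^'d"
  assumes pd: "pos_def V"
  shows "V ** matrix_inv V = mat 1"
proof -
  have pos: "\<And>v. v \<noteq> 0 \<Longrightarrow> v \<bullet> (V *v v) > 0"
    using pd by (auto simp: pos_def_def)
  have "inj ((*v) V)"
  proof (rule injI)
    fix u w assume "V *v u = V *v w"
    then have "V *v (u - w) = 0" by (simp add: matrix_vector_mult_diff_distrib)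
    then have "(u - w) \<bullet> (V *v (u - w)) = 0" by simp
    then show "u = w" using pos[of "u - w"] by (cases "u - w = 0") auto
  qed
  then have "invertible V" using matrix_left_invertible_injective invertible_left_inverse by blast
  then have "\<exists>A'. V ** A' = mat 1 \<and> A' ** V = mat 1" by (simp add: invertible_def)
  then show ?thesis unfolding matrix_inv_def by (rule someI2_ex) auto
qed

lemma Vbasis_Q:
  fixes V :: "real^'d^'d"
  assumes pd: "pos_def V" and B: "finite B" "card B = CARD('d)" "\<forall>b\<in>B. b \<noteq> 0"
      "\<forall>b\<in>B. \<forall>c\<in>B. b \<noteq> c \<longrightarrow> b \<bullet> (V *v c) = 0"
  shows "Z \<bullet> (matrix_inv V *v Z) = (\<Sum>b\<in>B. (b \<bullet> Z)\<^sup>2 / (b \<bullet> (V *v b)))"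
proof -
  have pos: "\<And>v. v \<noteq> 0 \<Longrightarrow> v \<bullet> (V *v v) > 0"
    using pd by (auto simp: pos_def_def)
  have indep: "independent B"
  proof
    assume "dependent B"
    then obtain l where l: "\<exists>v\<in>B. l v \<noteq> 0" "(\<Sum>v\<in>B. l v *\<^sub>R v) = 0"
      using dependent_finite[OF B(1)] by auto
    then obtain b where b: "b \<in> B" "l b \<noteq> 0" by auto
    have "b \<bullet> (V *v (\<Sum>v\<in>B. l v *\<^sub>R v)) = l b * (b \<bullet> (V *v b))"
      using B b by (intro Vorth_coef) auto
    then have "l b * (b \<bullet> (V *v b)) = 0" using l by simp
    then show False using b pos[of b] B by auto
  qed
  have "dim B = CARD('d)" using dim_eq_card_independent[OF indep] B by simp
  then have "span B = UNIV" using dim_eq_full[of B] by simp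
  define u where "u = matrix_inv V *v Z"
  have Vu: "V *v u = Z" unfolding u_def by (simp add: matrix_vector_mul_assoc Vinv[OF pd])
  have "u \<in> span B" using \<open>span B = UNIV\<close> by simp
  then obtain l where l: "u = (\<Sum>c\<in>B. l c *\<^sub>R c)" using span_finite[OF B(1)] by auto
  have bZ: "b \<bullet> Z = l b * (b \<bullet> (V *v b))" if "b \<in> B" for b
    unfolding Vu[symmetric] l using B that by (intro Vorth_coef) auto
  have "Z \<bullet> (matrix_inv V *v Z) = Z \<bullet> u" unfolding u_def ..
  also have "\<dots> = (\<Sum>b\<in>B. l b * (b \<bullet> Z))" unfolding l by (simp add: inner_sum_right inner_commute)
  also have "\<dots> = (\<Sum>b\<in>B. (b \<bullet> Z)\<^sup>2 / (b \<bullet> (V *v b)))"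
  proof (intro sum.cong refl)
    fix b assume "b \<in> B"
    then have "b \<bullet> (V *v b) > 0" using pos B by auto
    then show "l b * (b \<bullet> Z) = (b \<bullet> Z)\<^sup>2 / (b \<bullet> (V *v b))"
      using bZ[OF \<open>b \<in> B\<close>] by (simp add: power2_eq_square field_simps)
  qed
  finally show ?thesis .
qed



lemma gauss_term: "exp (-(real_of_int k)\<^sup>2 / 2) \<le> 2 * (1/2) ^ nat \<bar>k\<bar>"
proof -
  have "(real_of_int k)\<^sup>2 \<ge> 2 * \<bar>real_of_int k\<bar> - 1"
    using power2_eq_square[of "\<bar>real_of_int k\<bar> - 1"] zero_le_power2[of "\<bar>real_of_int k\<bar> - 1"]
    by (simp add: algebra_simps power2_eq_square)
  then have "exp (-(real_of_int k)\<^sup>2 / 2) \<le> exp (1/2 - real (nat \<bar>k\<bar>))" by simp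
  also have "\<dots> = exp (1/2) * exp (real (nat \<bar>k\<bar>) * (- 1))"
    by (simp flip: exp_add)
  also have "\<dots> = exp (1/2) * exp (- 1) ^ nat \<bar>k\<bar>"
    by (simp only: exp_of_nat_mult)
  also have "\<dots> \<le> 2 * (1/2) ^ nat \<bar>k\<bar>"
  proof (intro mult_mono power_mono)
    have "exp (1/2::real) * exp (1/2) = exp 1" by (simp flip: exp_add)
    also have "\<dots> \<le> 3" using exp_le by simp
    finally have "exp (1/2::real) * exp (1/2) \<le> 2 * 2" by simp
    then have "(exp (1/2::real))\<^sup>2 \<le> 2\<^sup>2" by (simp add: power2_eq_square)
    then show "exp (1/2::real) \<le> 2" by (rule power2_le_imp_le) simp
    have "2 \<le> exp (1::real)" using exp_ge_add_one_self[of 1] by simp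
    then show "exp (- 1::real) \<le> 1/2" by (simp add: exp_minus field_simps)
  qed auto
  finally show ?thesis .
qed

lemma gauss_sum_aux: "(\<Sum>k\<in>{-int m..int m}. 2 * (1/2::real) ^ nat \<bar>k\<bar>) = 6 - 4 * (1/2) ^ m"
proof (induction m)
  case 0 then show ?case by simp
next
  case (Suc m)
  have eq: "{-int (Suc m)..int (Suc m)} = insert (- int (Suc m)) (insert (int (Suc m)) {-int m..int m})"
    by auto
  have n1: "nat (int m + 1) = Suc m" "nat (1 + int m) = Suc m" by auto
  have A: "- int (Suc m) \<notin> insert (int (Suc m)) {-int m..int m}" "int (Suc m) \<notin> {-int m..int m}"
    by auto
  have "(\<Sum>k\<in>{-int (Suc m)..int (Suc m)}. 2 * (1/2::real) ^ nat \<bar>k\<bar>)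
      = 2 * (1/2) ^ nat \<bar>- int (Suc m)\<bar> + (2 * (1/2) ^ nat \<bar>int (Suc m)\<bar> + (\<Sum>k\<in>{-int m..int m}. 2 * (1/2::real) ^ nat \<bar>k\<bar>))"
    unfolding eq by (subst sum.insert, simp, rule A(1), subst sum.insert, simp, rule A(2), rule refl)
  also have "\<dots> = 2 * (1/2) ^ Suc m + (2 * (1/2) ^ Suc m + (6 - 4 * (1/2) ^ m))"
    using Suc.IH by (simp only: abs_minus_cancel abs_of_nat nat_int)
  also have "\<dots> = 6 - 4 * (1/2) ^ Suc m" by (simp only: power_Suc; linarith)
  finally show ?case .
qed

lemma gauss_sum: "(\<Sum>k\<in>{-int m..int m}. exp (-(real_of_int k)\<^sup>2 / 2)) \<le> 6"
proof -
  have "(\<Sum>k\<in>{-int m..int m}. exp (-(real_of_int k)\<^sup>2 / 2)) \<le> (\<Sum>k\<in>{-int m..int m}. 2 * (1/2::real) ^ nat \<bar>k\<bar>)"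
    by (intro sum_mono gauss_term)
  also have "\<dots> \<le> 6" unfolding gauss_sum_aux by (simp add: zero_le_power)
  finally show ?thesis .
qed



lemma J_eq:
  assumes "mle_score n S x y \<theta> = 0"
  shows "J_n n S x \<theta>s \<theta> = Zv n S x \<theta>s y"
proof -
  have "J_n n S x \<theta>s \<theta> = Zv n S x \<theta>s y + mle_score n S x y \<theta>"
    unfolding J_n_def Zv_def mle_score_def
    by (simp add: sum.distrib[symmetric] scaleR_add_left[symmetric])
  then show ?thesis using assms by simp
qed

lemma Zbound:
  assumes fin: "\<And>t. t \<in> {1..n} \<Longrightarrow> finite (S t)"
  shows "\<bar>b \<bullet> Zv n S x \<theta> y\<bar> \<le> (\<Sum>t\<in>{1..n}. \<Sum>i\<in>S t. \<bar>b \<bullet> x t i\<bar>)"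
proof -
  have "b \<bullet> Zv n S x \<theta> y = (\<Sum>t\<in>{1..n}. \<Sum>i\<in>S t. (onehot (y t) i - mnl_prob S x \<theta> t (Some i)) * (b \<bullet> x t i))"
    unfolding Zv_def by (simp add: inner_sum_right)
  also have "\<bar>\<dots>\<bar> \<le> (\<Sum>t\<in>{1..n}. \<bar>\<Sum>i\<in>S t. (onehot (y t) i - mnl_prob S x \<theta> t (Some i)) * (b \<bullet> x t i)\<bar>)"
    by (rule sum_abs)
  also have "\<dots> \<le> (\<Sum>t\<in>{1..n}. \<Sum>i\<in>S t. \<bar>b \<bullet> x t i\<bar>)"
  proof (intro sum_mono)
    fix t assume t: "t \<in> {1..n}"
    have "\<bar>\<Sum>i\<in>S t. (onehot (y t) i - mnl_prob S x \<theta> t (Some i)) * (b \<bullet> x t i)\<bar>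
        \<le> (\<Sum>i\<in>S t. \<bar>(onehot (y t) i - mnl_prob S x \<theta> t (Some i)) * (b \<bullet> x t i)\<bar>)"
      by (rule sum_abs)
    also have "\<dots> \<le> (\<Sum>i\<in>S t. \<bar>b \<bullet> x t i\<bar>)"
    proof (intro sum_mono)
      fix i
      have "0 \<le> mnl_prob S x \<theta> t (Some i)" "mnl_prob S x \<theta> t (Some i) \<le> 1"
        using mnl_prob_nonneg[of S x \<theta> t] mnl_prob_le1[of S t x \<theta>] fin[OF t] by auto
      then have "\<bar>onehot (y t) i - mnl_prob S x \<theta> t (Some i)\<bar> \<le> 1"
        by (auto simp: onehot_def)
      then show "\<bar>(onehot (y t) i - mnl_prob S x \<theta> t (Some i)) * (b \<bullet> x t i)\<bar> \<le> \<bar>b \<bullet> x t i\<bar>"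
        by (simp add: abs_mult mult_left_le_one_le)
    qed
    finally show "\<bar>\<Sum>i\<in>S t. (onehot (y t) i - mnl_prob S x \<theta> t (Some i)) * (b \<bullet> x t i)\<bar> \<le> (\<Sum>i\<in>S t. \<bar>b \<bullet> x t i\<bar>)" .
  qed
  finally show ?thesis .
qed

lemma mix_low:
  fixes w :: real and N :: nat
  assumes "\<bar>w\<bar> \<le> real N" "1 \<le> N"
  shows "exp (w\<^sup>2 / 4 - 1/4) \<le> (\<Sum>k\<in>{-int N..int N}. exp (real_of_int k * w - (real_of_int k)\<^sup>2))"
proof -
  define k0 where "k0 = round (w / 2)"
  have r: "\<bar>real_of_int k0 - w/2\<bar> \<le> 1/2" unfolding k0_def by (rule of_int_round_abs_le)
  have "real_of_int \<bar>k0\<bar> \<le> real N" using r assms by linarith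
  then have k0N: "k0 \<in> {-int N..int N}" by auto
  have "(real_of_int k0 - w/2)\<^sup>2 \<le> (1/2)\<^sup>2"
    using r by (metis abs_ge_zero power2_abs power_mono)
  then have "w\<^sup>2 / 4 - 1/4 \<le> real_of_int k0 * w - (real_of_int k0)\<^sup>2"
    by (simp add: power2_eq_square algebra_simps)
  then have "exp (w\<^sup>2 / 4 - 1/4) \<le> exp (real_of_int k0 * w - (real_of_int k0)\<^sup>2)" by simp
  also have "\<dots> \<le> (\<Sum>k\<in>{-int N..int N}. exp (real_of_int k * w - (real_of_int k)\<^sup>2))"
    using k0N by (intro member_le_sum) auto
  finally show ?thesis .
qed

lemma mix_exp:
  fixes P :: "'a pmf" and W :: "'b \<Rightarrow> 'a \<Rightarrow> real" and K :: "int set"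
  assumes finP: "finite (set_pmf P)" and finB: "finite B" and finK: "finite K"
    and sg: "\<And>l. measure_pmf.expectation P (\<lambda>y. exp (\<Sum>b\<in>B. l b * W b y)) \<le> exp ((\<Sum>b\<in>B. (l b)\<^sup>2) / 2)"
  shows "measure_pmf.expectation P (\<lambda>y. \<Prod>b\<in>B. \<Sum>k\<in>K. exp (real_of_int k * W b y - (real_of_int k)\<^sup>2))
         \<le> (\<Sum>k\<in>K. exp (-(real_of_int k)\<^sup>2 / 2)) ^ card B"
proof -
  let ?G = "PiE B (\<lambda>_. K)"
  have finG: "finite ?G" using finB finK by (intro finite_PiE) auto
  have fact1: "(\<Prod>b\<in>B. exp (real_of_int (g b) * W b y - (real_of_int (g b))\<^sup>2))
        = exp (\<Sum>b\<in>B. real_of_int (g b) * W b y) / exp (\<Sum>b\<in>B. (real_of_int (g b))\<^sup>2)" for g y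
  proof -
    have "(\<Prod>b\<in>B. exp (real_of_int (g b) * W b y - (real_of_int (g b))\<^sup>2))
        = exp (\<Sum>b\<in>B. real_of_int (g b) * W b y - (real_of_int (g b))\<^sup>2)"
      using finB by (rule exp_sum[symmetric])
    also have "\<dots> = exp ((\<Sum>b\<in>B. real_of_int (g b) * W b y) - (\<Sum>b\<in>B. (real_of_int (g b))\<^sup>2))"
      by (simp only: sum_subtractf)
    finally show ?thesis by (simp only: exp_diff)
  qed
  have "measure_pmf.expectation P (\<lambda>y. \<Prod>b\<in>B. \<Sum>k\<in>K. exp (real_of_int k * W b y - (real_of_int k)\<^sup>2))
      = measure_pmf.expectation P (\<lambda>y. \<Sum>g\<in>?G. exp (\<Sum>b\<in>B. real_of_int (g b) * W b y) / exp (\<Sum>b\<in>B. (real_of_int (g b))\<^sup>2))"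
    by (simp add: prod_sum_PiE[OF finB finK] fact1)
  also have "\<dots> = (\<Sum>g\<in>?G. measure_pmf.expectation P (\<lambda>y. exp (\<Sum>b\<in>B. real_of_int (g b) * W b y)) / exp (\<Sum>b\<in>B. (real_of_int (g b))\<^sup>2))"
    by (subst Bochner_Integration.integral_sum) (auto intro: integrable_measure_pmf_finite finP)
  also have "\<dots> \<le> (\<Sum>g\<in>?G. exp ((\<Sum>b\<in>B. (real_of_int (g b))\<^sup>2) / 2) / exp (\<Sum>b\<in>B. (real_of_int (g b))\<^sup>2))"
    by (intro sum_mono divide_right_mono sg) auto
  also have "\<dots> = (\<Sum>g\<in>?G. \<Prod>b\<in>B. exp (-(real_of_int (g b))\<^sup>2 / 2))"
  proof (intro sum.cong refl)
    fix g
    have "exp ((\<Sum>b\<in>B. (real_of_int (g b))\<^sup>2) / 2) / exp (\<Sum>b\<in>B. (real_of_int (g b))\<^sup>2)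
        = exp ((\<Sum>b\<in>B. (real_of_int (g b))\<^sup>2) / 2 - (\<Sum>b\<in>B. (real_of_int (g b))\<^sup>2))"
      by (simp only: exp_diff)
    also have "(\<Sum>b\<in>B. (real_of_int (g b))\<^sup>2) / 2 - (\<Sum>b\<in>B. (real_of_int (g b))\<^sup>2)
        = (\<Sum>b\<in>B. -(real_of_int (g b))\<^sup>2 / 2)"
      by (simp add: sum_divide_distrib[symmetric] sum_negf)
    also have "exp (\<Sum>b\<in>B. -(real_of_int (g b))\<^sup>2 / 2) = (\<Prod>b\<in>B. exp (-(real_of_int (g b))\<^sup>2 / 2))"
      using finB by (rule exp_sum)
    finally show "exp ((\<Sum>b\<in>B. (real_of_int (g b))\<^sup>2) / 2) / exp (\<Sum>b\<in>B. (real_of_int (g b))\<^sup>2)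
        = (\<Prod>b\<in>B. exp (-(real_of_int (g b))\<^sup>2 / 2))" .
  qed
  also have "\<dots> = (\<Prod>b\<in>B. \<Sum>k\<in>K. exp (-(real_of_int k)\<^sup>2 / 2))"
    by (rule prod_sum_PiE[OF finB finK, symmetric])
  also have "\<dots> = (\<Sum>k\<in>K. exp (-(real_of_int k)\<^sup>2 / 2)) ^ card B" by simp
  finally show ?thesis .
qed



theorem lemma15:
  fixes n :: nat and S :: "nat \<Rightarrow> 'i set" and x :: "nat \<Rightarrow> 'i \<Rightarrow> real^'d"
    and \<theta>s :: "real^'d" and \<delta> :: real
  assumes "\<And>t. t \<in> {1..n} \<Longrightarrow> finite (S t)"
    and "pos_def (gram n S x)"
    and "\<delta> > 0"
  shows "measure_pmf.prob (mnl_responses n S x \<theta>s)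
           {y. \<forall>\<theta>hat. mle_score n S x y \<theta>hat = 0 \<longrightarrow>
                 inv_weighted_norm (gram n S x) (J_n n S x \<theta>s \<theta>hat)
                   \<le> 4 * sqrt (2 * real CARD('d) + ln (1 / \<delta>))}
         \<ge> 1 - \<delta>"
proof -
  note fin = assms(1) and pd = assms(2)
  define P where "P = mnl_responses n S x \<theta>s"
  define V where "V = gram n S x"
  define T where "T = 4 * sqrt (2 * real CARD('d) + ln (1 / \<delta>))"
  show ?thesis
  proof (cases "1 \<le> \<delta>")
    case True
    then show ?thesis using measure_nonneg[of "measure_pmf (mnl_responses n S x \<theta>s)"] by (smt (verit))
  next
    case False
    define L where "L = ln (1 / \<delta>)"
    have L0: "0 \<le> L" unfolding L_def using False assms(3) by (intro ln_ge_zero) (simp add: field_simps)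
    have eL: "exp (- L) = \<delta>" unfolding L_def using assms(3) by (simp add: ln_div)
    have T2: "T\<^sup>2 = 16 * (2 * real CARD('d) + L)"
      unfolding T_def L_def using L0 unfolding L_def by (simp add: power_mult_distrib)
    have T0: "0 \<le> T" unfolding T_def using L0 unfolding L_def by simp
    obtain B where B: "finite B" "card B = CARD('d)" "\<forall>b\<in>B. b \<noteq> 0"
        "\<forall>b\<in>B. \<forall>c\<in>B. b \<noteq> c \<longrightarrow> b \<bullet> (V *v c) = 0"
      using Vbasis_ex[of V "CARD('d)"] pd unfolding V_def by auto
    have pos: "\<And>v. v \<noteq> 0 \<Longrightarrow> v \<bullet> (V *v v) > 0"
      using pd unfolding V_def by (auto simp: pos_def_def)
    define nb where "nb b = b \<bullet> (V *v b)" for b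
    have nbpos: "0 < nb b" if "b \<in> B" for b unfolding nb_def using pos B(3) that by auto
    define Z where "Z y = Zv n S x \<theta>s y" for y
    define W where "W b y = (b \<bullet> Z y) / sqrt (nb b)" for b y
    have Qeq: "Z y \<bullet> (matrix_inv V *v Z y) = (\<Sum>b\<in>B. (W b y)\<^sup>2)" for y
    proof -
      have "Z y \<bullet> (matrix_inv V *v Z y) = (\<Sum>b\<in>B. (b \<bullet> Z y)\<^sup>2 / (b \<bullet> (V *v b)))"
        using Vbasis_Q[of V B "Z y"] pd B unfolding V_def by auto
      also have "\<dots> = (\<Sum>b\<in>B. (W b y)\<^sup>2)"
      proof (intro sum.cong refl)
        fix b assume "b \<in> B"
        then have "0 \<le> nb b" using nbpos by (simp add: less_imp_le)
        then show "(b \<bullet> Z y)\<^sup>2 / (b \<bullet> (V *v b)) = (W b y)\<^sup>2"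
          unfolding W_def by (simp add: power_divide nb_def)
      qed
      finally show ?thesis .
    qed
    define C where "C b = (\<Sum>t\<in>{1..n}. \<Sum>i\<in>S t. \<bar>b \<bullet> x t i\<bar>) / sqrt (nb b)" for b
    define M where "M = (\<Sum>b\<in>B. C b)"
    have Wb: "\<bar>W b y\<bar> \<le> M" if b: "b \<in> B" for b y
    proof -
      have sp: "0 < sqrt (nb b)" using nbpos[OF b] by simp
      have "\<bar>W b y\<bar> = \<bar>b \<bullet> Z y\<bar> / sqrt (nb b)" unfolding W_def using sp by (simp add: abs_div)
      also have "\<dots> \<le> C b" unfolding C_def Z_def
        using sp Zbound[of n S b x \<theta>s y] fin by (intro divide_right_mono) auto
      also have "\<dots> \<le> M" unfolding M_def using B(1) b
        by (intro member_le_sum) (auto simp: C_def less_imp_le[OF nbpos] intro!: divide_nonneg_nonneg sum_nonneg)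
      finally show ?thesis .
    qed
    define N where "N = nat \<lceil>M\<rceil> + 1"
    have WN: "\<bar>W b y\<bar> \<le> real N" if "b \<in> B" for b y
    proof -
      have h1: "M \<le> real (nat \<lceil>M\<rceil>)" by linarith
      have h2: "real N = real (nat \<lceil>M\<rceil>) + 1" unfolding N_def by simp
      show ?thesis using Wb[OF that, of y] h1 h2 by linarith
    qed
    define K where "K = {-int N..int N}"
    define F where "F y = (\<Prod>b\<in>B. \<Sum>k\<in>K. exp (real_of_int k * W b y - (real_of_int k)\<^sup>2))" for y
    have Fnn: "0 \<le> F y" for y unfolding F_def by (intro prod_nonneg sum_nonneg) auto
    have Flow: "exp ((\<Sum>b\<in>B. (W b y)\<^sup>2) / 4 - real CARD('d) / 4) \<le> F y" for y
    proof -
      have "exp ((\<Sum>b\<in>B. (W b y)\<^sup>2) / 4 - real CARD('d) / 4) = exp (\<Sum>b\<in>B. (W b y)\<^sup>2 / 4 - 1/4)"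
        using B(2) by (simp add: sum_subtractf sum_divide_distrib)
      also have "\<dots> = (\<Prod>b\<in>B. exp ((W b y)\<^sup>2 / 4 - 1/4))" using B(1) by (rule exp_sum)
      also have "\<dots> \<le> F y" unfolding F_def K_def
        by (intro prod_mono conjI mix_low WN) (auto simp: N_def)
      finally show ?thesis .
    qed
    have sg: "measure_pmf.expectation P (\<lambda>y. exp (\<Sum>b\<in>B. l b * W b y)) \<le> exp ((\<Sum>b\<in>B. (l b)\<^sup>2) / 2)" for l
    proof -
      define v where "v = (\<Sum>b\<in>B. (l b / sqrt (nb b)) *\<^sub>R b)"
      have lin: "(\<Sum>b\<in>B. l b * W b y) = v \<bullet> Z y" for y
        unfolding v_def W_def by (simp add: inner_sum_left)
      have bv: "b \<bullet> (V *v v) = (l b / sqrt (nb b)) * nb b" if "b \<in> B" for b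
        unfolding v_def nb_def using B that by (intro Vorth_coef) auto
      have quad: "v \<bullet> (V *v v) = (\<Sum>b\<in>B. (l b)\<^sup>2)"
      proof -
        have "v \<bullet> (V *v v) = (\<Sum>b\<in>B. (l b / sqrt (nb b)) * (b \<bullet> (V *v v)))"
          unfolding v_def by (simp add: inner_sum_left)
        also have "\<dots> = (\<Sum>b\<in>B. (l b)\<^sup>2)"
        proof (intro sum.cong refl)
          fix b assume b: "b \<in> B"
          have ss: "sqrt (nb b) * sqrt (nb b) = nb b" using nbpos[OF b] by simp
          have sp: "0 < sqrt (nb b)" using nbpos[OF b] by simp
          have "b \<bullet> (V *v v) = (l b / sqrt (nb b)) * (sqrt (nb b) * sqrt (nb b))"
            using bv[OF b] ss by simp
          also have "\<dots> = l b * sqrt (nb b)" using sp by (simp add: field_simps)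
          finally show "(l b / sqrt (nb b)) * (b \<bullet> (V *v v)) = (l b)\<^sup>2"
            using sp by (simp add: power2_eq_square field_simps)
        qed
        finally show ?thesis .
      qed
      show ?thesis unfolding lin P_def Z_def
        using subg[of n S x \<theta>s v] fin quad unfolding V_def by simp
    qed
    have finP: "finite (set_pmf P)" unfolding P_def using fin_resp[of n S x \<theta>s] fin by simp
    have EF: "measure_pmf.expectation P F \<le> 6 ^ CARD('d)"
    proof -
      have "measure_pmf.expectation P F \<le> (\<Sum>k\<in>K. exp (-(real_of_int k)\<^sup>2 / 2)) ^ card B"
        unfolding F_def using mix_exp[of P B K W] finP B(1) sg unfolding K_def by simp
      also have "\<dots> \<le> 6 ^ CARD('d)" unfolding K_def B(2)
        by (intro power_mono gauss_sum sum_nonneg) auto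
      finally show ?thesis .
    qed
    define c where "c = exp (T\<^sup>2 / 4 - real CARD('d) / 4)"
    have c0: "0 < c" unfolding c_def by simp
    have Mk: "measure_pmf.prob P {y. c \<le> F y} \<le> measure_pmf.expectation P F / c"
      using integral_Markov_inequality_measure[of "measure_pmf P" F UNIV c] finP c0 Fnn
      by (simp add: integrable_measure_pmf_finite)
    have bad: "measure_pmf.prob P {y. T\<^sup>2 < (\<Sum>b\<in>B. (W b y)\<^sup>2)} \<le> \<delta>"
    proof -
      have "{y. T\<^sup>2 < (\<Sum>b\<in>B. (W b y)\<^sup>2)} \<subseteq> {y. c \<le> F y}"
      proof safe
        fix y assume "T\<^sup>2 < (\<Sum>b\<in>B. (W b y)\<^sup>2)"
        then have "c \<le> exp ((\<Sum>b\<in>B. (W b y)\<^sup>2) / 4 - real CARD('d) / 4)" unfolding c_def by simp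
        then show "c \<le> F y" using Flow[of y] by linarith
      qed
      then have "measure_pmf.prob P {y. T\<^sup>2 < (\<Sum>b\<in>B. (W b y)\<^sup>2)} \<le> measure_pmf.prob P {y. c \<le> F y}"
        by (intro measure_pmf.finite_measure_mono) auto
      also have "\<dots> \<le> measure_pmf.expectation P F / c" by (rule Mk)
      also have "\<dots> \<le> 6 ^ CARD('d) / c" using EF c0 by (simp add: divide_right_mono)
      also have "\<dots> \<le> exp 7 ^ CARD('d) / c"
      proof -
        have "(6::real) \<le> exp 7" using exp_ge_add_one_self[of 7] by simp
        then show ?thesis using c0 by (intro divide_right_mono power_mono) auto
      qed
      also have "\<dots> = exp (real CARD('d) * 7 - (T\<^sup>2 / 4 - real CARD('d) / 4))"
      proof -
        have "exp 7 ^ CARD('d) = exp (real CARD('d) * 7)" by (simp only: exp_of_nat_mult)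
        then show ?thesis unfolding c_def by (simp only: exp_diff)
      qed
      also have "\<dots> \<le> exp (- L)" unfolding T2 exp_le_cancel_iff using L0 of_nat_0_le_iff[of "CARD('d)"] by (simp add: field_simps)
      also have "\<dots> = \<delta>" by (rule eL)
      finally show ?thesis .
    qed
    have sub: "{y. (\<Sum>b\<in>B. (W b y)\<^sup>2) \<le> T\<^sup>2} \<subseteq>
        {y. \<forall>\<theta>hat. mle_score n S x y \<theta>hat = 0 \<longrightarrow> inv_weighted_norm (gram n S x) (J_n n S x \<theta>s \<theta>hat) \<le> T}"
    proof safe
      fix y \<theta>hat assume y: "(\<Sum>b\<in>B. (W b y)\<^sup>2) \<le> T\<^sup>2" and sc: "mle_score n S x y \<theta>hat = 0"
      have "inv_weighted_norm (gram n S x) (J_n n S x \<theta>s \<theta>hat) = sqrt (\<Sum>b\<in>B. (W b y)\<^sup>2)"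
        unfolding J_eq[OF sc] inv_weighted_norm_def Qeq[symmetric] V_def Z_def ..
      also have "\<dots> \<le> sqrt (T\<^sup>2)" using y by (rule real_sqrt_le_mono)
      also have "\<dots> = T" using T0 by simp
      finally show "inv_weighted_norm (gram n S x) (J_n n S x \<theta>s \<theta>hat) \<le> T" .
    qed
    have "1 - \<delta> \<le> 1 - measure_pmf.prob P {y. T\<^sup>2 < (\<Sum>b\<in>B. (W b y)\<^sup>2)}" using bad by simp
    also have "\<dots> = measure_pmf.prob P (UNIV - {y. T\<^sup>2 < (\<Sum>b\<in>B. (W b y)\<^sup>2)})"
      by (subst measure_pmf.prob_compl[symmetric]) auto
    also have "UNIV - {y. T\<^sup>2 < (\<Sum>b\<in>B. (W b y)\<^sup>2)} = {y. (\<Sum>b\<in>B. (W b y)\<^sup>2) \<le> T\<^sup>2}" by auto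
    also have "measure_pmf.prob P {y. (\<Sum>b\<in>B. (W b y)\<^sup>2) \<le> T\<^sup>2} \<le>
        measure_pmf.prob P {y. \<forall>\<theta>hat. mle_score n S x y \<theta>hat = 0 \<longrightarrow> inv_weighted_norm (gram n S x) (J_n n S x \<theta>s \<theta>hat) \<le> T}"
      using sub by (intro measure_pmf.finite_measure_mono) auto
    finally show ?thesis unfolding P_def T_def .
  qed
qed


end
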